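(* Let $P$ and $Q$ be probability measures on a measurable space $(\mathcal{X},\mathcal{A})$ with densities $f$ and $g$, respectively, with respect to a measure $\mu$ on $(\mathcal{X},\mathcal{A})$. Suppose that $g/f \le \rho$ for some number $\rho \in [1,\infty)$. (a) For any non-decreasing function $\psi : [0,\infty) \to \mathbb{R}$ with $\psi(1) = 0$, \[ \int \psi(g/f) \, dQ \ \le \ Q(\{g > f\}) \, \psi(\rho) . \] (b) For any convex function $\psi : [0,\infty) \to \mathbb{R}$, \[ \int \psi(g/f) \, dP \ \le \ \psi(0) + \frac{\psi(\rho) - \psi(0)}{\rho} . \] Both inequalities are equalities if $g/f$ takes only values in $\{0,\rho\}$.
   Context: Ratios use the conventions $0/0 := 0$ and $a/0 := \infty$ for $a > 0$. *)

theory Defs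
  imports "HOL-Probability.Probability_Measure"
begin

definition ratio :: "real \<Rightarrow> real \<Rightarrow> ereal" where
  "ratio a b = (if b = 0 then (if a = 0 then 0 else \<infinity>) else ereal (a / b))"

end

theory Submission
  imports Defs "HOL-Analysis.Analysis"
begin

theorem proposition1:
  fixes M :: "'a measure" and f g :: "'a \<Rightarrow> real" and \<rho> :: real
  assumes f_meas: "f \<in> borel_measurable M" and g_meas: "g \<in> borel_measurable M"
    and f_nn: "\<And>x. x \<in> space M \<Longrightarrow> 0 \<le> f x"
    and g_nn: "\<And>x. x \<in> space M \<Longrightarrow> 0 \<le> g x"
    and P_prob: "prob_space (density M (\<lambda>x. ennreal (f x)))"
    and Q_prob: "prob_space (density M (\<lambda>x. ennreal (g x)))"
    and rho: "1 \<le> \<rho>"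
    and bound: "\<And>x. x \<in> space M \<Longrightarrow> ratio (g x) (f x) \<le> ereal \<rho>"
  shows
    "(\<forall>\<psi> :: real \<Rightarrow> real. mono_on {0..} \<psi> \<and> \<psi> 1 = 0 \<longrightarrow>
       integral\<^sup>L (density M (\<lambda>x. ennreal (g x))) (\<lambda>x. \<psi> (real_of_ereal (ratio (g x) (f x))))
       \<le> measure (density M (\<lambda>x. ennreal (g x))) {x \<in> space M. g x > f x} * \<psi> \<rho>) \<and>
    (\<forall>\<psi> :: real \<Rightarrow> real. convex_on {0..} \<psi> \<longrightarrow>
       integral\<^sup>L (density M (\<lambda>x. ennreal (f x))) (\<lambda>x. \<psi> (real_of_ereal (ratio (g x) (f x))))
       \<le> \<psi> 0 + (\<psi> \<rho> - \<psi> 0) / \<rho>) \<and>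
    ((\<forall>x\<in>space M. ratio (g x) (f x) \<in> {0, ereal \<rho>}) \<longrightarrow>
     (\<forall>\<psi> :: real \<Rightarrow> real. mono_on {0..} \<psi> \<and> \<psi> 1 = 0 \<longrightarrow>
       integral\<^sup>L (density M (\<lambda>x. ennreal (g x))) (\<lambda>x. \<psi> (real_of_ereal (ratio (g x) (f x))))
       = measure (density M (\<lambda>x. ennreal (g x))) {x \<in> space M. g x > f x} * \<psi> \<rho>) \<and>
     (\<forall>\<psi> :: real \<Rightarrow> real. convex_on {0..} \<psi> \<longrightarrow>
       integral\<^sup>L (density M (\<lambda>x. ennreal (f x))) (\<lambda>x. \<psi> (real_of_ereal (ratio (g x) (f x))))
       = \<psi> 0 + (\<psi> \<rho> - \<psi> 0) / \<rho>))"
proof -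
  define P where "P = density M (\<lambda>x. ennreal (f x))"
  define Q where "Q = density M (\<lambda>x. ennreal (g x))"
  define r where "r = (\<lambda>x. real_of_ereal (ratio (g x) (f x)))"
  interpret P: prob_space P using P_prob P_def by simp
  interpret Q: prob_space Q using Q_prob Q_def by simp
  have spP: "space P = space M" and setsP: "sets P = sets M" by (auto simp: P_def)
  have spQ: "space Q = space M" and setsQ: "sets Q = sets M" by (auto simp: Q_def)
  have f0: "g x = 0" if "x \<in> space M" "f x = 0" for x
    using bound[OF that(1)] that by (auto simp: ratio_def split: if_splits)
  have r_eq: "r x = (if f x = 0 then 0 else g x / f x)" if "x \<in> space M" for x
    using f0[OF that] by (auto simp: r_def ratio_def)
  have r_nn: "0 \<le> r x" if "x \<in> space M" for x
    using r_eq[OF that] f_nn[OF that] g_nn[OF that] by auto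
  have r_le: "r x \<le> \<rho>" if "x \<in> space M" for x
  proof (cases "f x = 0")
    case True then show ?thesis using r_eq[OF that] rho by simp
  next
    case False then show ?thesis using r_eq[OF that] bound[OF that] by (simp add: ratio_def)
  qed
  have fr: "f x * r x = g x" if "x \<in> space M" for x
    using r_eq[OF that] f0[OF that] by auto
  have r_meas: "r \<in> borel_measurable M"
  proof -
    have "(\<lambda>x. if f x = 0 then 0 else g x / f x) \<in> borel_measurable M"
      using f_meas g_meas by measurable
    then show ?thesis by (rule measurable_cong[THEN iffD1, rotated]) (simp add: r_eq)
  qed
  have gt: "1 < r x" if "x \<in> space M" "g x > f x" for x
  proof -
    have "f x \<noteq> 0" using f0[OF that(1)] that by auto
    then have "f x > 0" using f_nn[OF that(1)] by simp
    then show ?thesis using r_eq[OF that(1)] that by simp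
  qed
  have le1: "r x \<le> 1" if "x \<in> space M" "g x \<le> f x" for x
  proof (cases "f x = 0")
    case True then show ?thesis using r_eq[OF that(1)] by simp
  next
    case False then have "f x > 0" using f_nn[OF that(1)] by simp
    then show ?thesis using r_eq[OF that(1)] that by simp
  qed
  have int_r: "integral\<^sup>L P r = 1"
  proof -
    have "integral\<^sup>L P r = integral\<^sup>L M (\<lambda>x. f x * r x)"
      unfolding P_def using r_meas f_meas f_nn by (subst integral_density) auto
    also have "\<dots> = integral\<^sup>L M g"
      by (rule Bochner_Integration.integral_cong) (auto simp: fr)
    also have "\<dots> = integral\<^sup>L Q (\<lambda>_. 1::real)"
      unfolding Q_def using g_meas g_nn by (subst integral_density) auto
    also have "\<dots> = 1" using Q.prob_space by simp
    finally show ?thesis .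
  qed
  have r_intP: "integrable P r"
    by (rule P.integrable_const_bound[where B=\<rho>])
       (auto simp: spP r_nn r_le measurable_cong_sets[OF setsP refl] r_meas)

  define A where "A = {x \<in> space M. g x > f x}"
  have A_sets: "A \<in> sets M" unfolding A_def using f_meas g_meas by measurable
  have AEg: "AE x in Q. 0 < g x"
    unfolding Q_def using g_meas by (subst AE_density) auto
  have partA: "mono_on {0..} \<psi> \<and> \<psi> 1 = 0 \<Longrightarrow>
      integrable Q (\<lambda>x. \<psi> (r x)) \<and> (\<forall>x\<in>space M. \<psi> (r x) \<le> \<psi> \<rho> * indicator A x)
      \<and> integral\<^sup>L Q (\<lambda>x. \<psi> \<rho> * indicator A x) = measure Q A * \<psi> \<rho>
      \<and> ((\<forall>x\<in>space M. ratio (g x) (f x) \<in> {0, ereal \<rho>}) \<longrightarrow>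
           (AE x in Q. \<psi> (r x) = \<psi> \<rho> * indicator A x))" for \<psi>
  proof -
    assume h: "mono_on {0..} \<psi> \<and> \<psi> 1 = 0"
    have mo: "mono (\<lambda>t. \<psi> (max 0 t))"
      using h by (auto simp: mono_def mono_on_def)
    have "(\<lambda>x. \<psi> (max 0 (r x))) \<in> borel_measurable M"
      using measurable_compose[OF r_meas borel_measurable_mono[OF mo]] by simp
    then have meas: "(\<lambda>x. \<psi> (r x)) \<in> borel_measurable M"
      by (rule measurable_cong[THEN iffD1, rotated]) (simp add: r_nn max_def)
    have lo: "\<psi> 0 \<le> \<psi> (r x)" and hi: "\<psi> (r x) \<le> \<psi> \<rho>" if "x \<in> space M" for x
      using h r_nn[OF that] r_le[OF that] rho by (auto simp: mono_on_def)
    have int: "integrable Q (\<lambda>x. \<psi> (r x))"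
    proof (rule Q.integrable_const_bound[where B="\<bar>\<psi> 0\<bar> + \<bar>\<psi> \<rho>\<bar>"])
      have "\<bar>\<psi> (r x)\<bar> \<le> \<bar>\<psi> 0\<bar> + \<bar>\<psi> \<rho>\<bar>" if "x \<in> space Q" for x
        using lo[of x] hi[of x] that by (simp add: spQ abs_le_iff) arith
      then show "AE x in Q. norm (\<psi> (r x)) \<le> \<bar>\<psi> 0\<bar> + \<bar>\<psi> \<rho>\<bar>" by (intro AE_I2) simp
      show "(\<lambda>x. \<psi> (r x)) \<in> borel_measurable Q"
        using meas by (simp add: measurable_cong_sets[OF setsQ refl])
    qed
    have pw: "\<psi> (r x) \<le> \<psi> \<rho> * indicator A x" if "x \<in> space M" for x
    proof (cases "g x > f x")
      case True then show ?thesis using hi[OF that] that by (simp add: A_def)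
    next
      case False
      then have "\<psi> (r x) \<le> \<psi> 1" using h le1[OF that] r_nn[OF that] False unfolding mono_on_def by (meson atLeast_iff not_less order_refl zero_le_one)
      then show ?thesis using False h by (simp add: A_def)
    qed
    have ii: "integral\<^sup>L Q (\<lambda>x. \<psi> \<rho> * indicator A x) = measure Q A * \<psi> \<rho>"
      using A_sets setsQ by simp
    have eq: "AE x in Q. \<psi> (r x) = \<psi> \<rho> * indicator A x"
      if tw: "\<forall>x\<in>space M. ratio (g x) (f x) \<in> {0, ereal \<rho>}"
    proof -
      have "AE x in Q. x \<in> space M" by (rule AE_I2) (simp add: spQ)
      with AEg show ?thesis
      proof eventually_elim
        case (elim x)
        then have xs: "x \<in> space M" and gp: "0 < g x" by auto
        have fnz: "f x \<noteq> 0" using f0[OF xs] gp by auto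
        have "r x = 0 \<or> r x = \<rho>" using tw xs by (auto simp: r_def)
        moreover have "r x \<noteq> 0" using r_eq[OF xs] fnz gp by simp
        ultimately have rr: "r x = \<rho>" by simp
        show ?case
        proof (cases "g x > f x")
          case True then show ?thesis using rr xs by (simp add: A_def)
        next
          case False then have "\<rho> = 1" using le1[OF xs] rr rho by simp
          then show ?thesis using rr h False by (simp add: A_def)
        qed
      qed
    qed
    show ?thesis using int pw ii eq by blast
  qed
  have thA: "integral\<^sup>L Q (\<lambda>x. \<psi> (r x)) \<le> measure Q A * \<psi> \<rho>"
    if h: "mono_on {0..} \<psi> \<and> \<psi> 1 = 0" for \<psi>
  proof -
    note pa = partA[OF h]
    have ii: "integral\<^sup>L Q (\<lambda>x. \<psi> \<rho> * indicator A x) = measure Q A * \<psi> \<rho>" using pa by blast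
    have "integral\<^sup>L Q (\<lambda>x. \<psi> (r x)) \<le> integral\<^sup>L Q (\<lambda>x. \<psi> \<rho> * indicator A x)"
      apply (rule integral_mono)
      subgoal using pa by blast
      subgoal using A_sets setsQ by (intro integrable_mult_right integrable_real_indicator) (auto simp: Q.emeasure_finite top.not_eq_extremum[symmetric])
      subgoal using pa by (simp add: spQ)
      done
    then show ?thesis using ii by linarith
  qed
  have thA': "integral\<^sup>L Q (\<lambda>x. \<psi> (r x)) = measure Q A * \<psi> \<rho>"
    if h: "mono_on {0..} \<psi> \<and> \<psi> 1 = 0" and tw: "\<forall>x\<in>space M. ratio (g x) (f x) \<in> {0, ereal \<rho>}" for \<psi>
  proof -
    note pa = partA[OF h]
    have ii: "integral\<^sup>L Q (\<lambda>x. \<psi> \<rho> * indicator A x) = measure Q A * \<psi> \<rho>" using pa by blast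
    have "integral\<^sup>L Q (\<lambda>x. \<psi> (r x)) = integral\<^sup>L Q (\<lambda>x. \<psi> \<rho> * indicator A x)"
      apply (rule integral_cong_AE)
      subgoal using pa by (blast intro: borel_measurable_integrable)
      subgoal using A_sets setsQ by (intro borel_measurable_times borel_measurable_const borel_measurable_indicator) auto
      subgoal using pa tw by blast
      done
    then show ?thesis using ii by linarith
  qed

  have partB: "integrable P (\<lambda>x. \<psi> (r x)) \<and>
      (\<forall>x\<in>space M. \<psi> (r x) \<le> \<psi> 0 + (\<psi> \<rho> - \<psi> 0) / \<rho> * r x) \<and>
      integral\<^sup>L P (\<lambda>x. \<psi> 0 + (\<psi> \<rho> - \<psi> 0) / \<rho> * r x) = \<psi> 0 + (\<psi> \<rho> - \<psi> 0) / \<rho> \<and>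
      integrable P (\<lambda>x. \<psi> 0 + (\<psi> \<rho> - \<psi> 0) / \<rho> * r x)"
    if cv: "convex_on {0..} \<psi>" for \<psi> :: "real \<Rightarrow> real"
  proof -
    have lin: "\<psi> t \<le> \<psi> 0 + (\<psi> \<rho> - \<psi> 0) / \<rho> * t" if "0 \<le> t" "t \<le> \<rho>" for t
    proof -
      have "\<psi> ((1 - t/\<rho>) *\<^sub>R 0 + (t/\<rho>) *\<^sub>R \<rho>) \<le> (1 - t/\<rho>) * \<psi> 0 + (t/\<rho>) * \<psi> \<rho>"
        by (rule convex_onD[OF cv]) (use that rho in auto)
      moreover have "(1 - t/\<rho>) *\<^sub>R 0 + (t/\<rho>) *\<^sub>R \<rho> = t" using rho by simp
      moreover have "(1 - t/\<rho>) * \<psi> 0 + (t/\<rho>) * \<psi> \<rho> = \<psi> 0 + (\<psi> \<rho> - \<psi> 0) / \<rho> * t"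
        using rho by (simp add: field_simps)
      ultimately show ?thesis by simp
    qed
    have up: "\<psi> t \<le> \<bar>\<psi> 0\<bar> + \<bar>\<psi> \<rho>\<bar>" if "0 \<le> t" "t \<le> \<rho>" for t
    proof -
      have "\<psi> 0 + (\<psi> \<rho> - \<psi> 0) / \<rho> * t = (1 - t/\<rho>) * \<psi> 0 + (t/\<rho>) * \<psi> \<rho>"
        using rho by (simp add: field_simps)
      also have "\<dots> \<le> (1 - t/\<rho>) * \<bar>\<psi> 0\<bar> + (t/\<rho>) * \<bar>\<psi> \<rho>\<bar>"
        using that rho by (intro add_mono mult_left_mono) auto
      also have "\<dots> \<le> \<bar>\<psi> 0\<bar> + \<bar>\<psi> \<rho>\<bar>"
      proof (rule add_mono)
        have "t/\<rho> \<le> 1" "0 \<le> t/\<rho>" using that rho by auto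
        then show "(1 - t/\<rho>) * \<bar>\<psi> 0\<bar> \<le> \<bar>\<psi> 0\<bar>" "(t/\<rho>) * \<bar>\<psi> \<rho>\<bar> \<le> \<bar>\<psi> \<rho>\<bar>"
          by (auto intro!: mult_left_le_one_le simp del: times_divide_eq_left)
      qed
      finally show ?thesis using lin[OF that] by linarith
    qed
    have low: "2 * \<psi> (\<rho>/2) - (\<bar>\<psi> 0\<bar> + \<bar>\<psi> \<rho>\<bar>) \<le> \<psi> t" if "0 \<le> t" "t \<le> \<rho>" for t
    proof -
      have "\<psi> ((1 - 1/2) *\<^sub>R t + (1/2) *\<^sub>R (\<rho> - t)) \<le> (1 - 1/2) * \<psi> t + (1/2) * \<psi> (\<rho> - t)"
        by (rule convex_onD[OF cv]) (use that in auto)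
      moreover have "(1 - 1/2) *\<^sub>R t + (1/2) *\<^sub>R (\<rho> - t) = \<rho>/2" by (simp add: field_simps)
      ultimately have c: "\<psi> (\<rho>/2) \<le> (1 - 1/2) * \<psi> t + (1/2) * \<psi> (\<rho> - t)" by metis
      have "\<psi> (\<rho> - t) \<le> \<bar>\<psi> 0\<bar> + \<bar>\<psi> \<rho>\<bar>" using up[of "\<rho> - t"] that by simp
      with c show ?thesis by simp
    qed
    have contc: "continuous_on {0<..} \<psi>"
      by (rule convex_on_continuous) (auto intro: convex_on_subset[OF cv])
    have m1: "(\<lambda>t. indicator {0<..} t *\<^sub>R \<psi> t) \<in> borel_measurable borel"
      by (rule borel_measurable_continuous_on_indicator[OF _ contc]) simp
    have "(\<lambda>x. indicator {0<..} (r x) *\<^sub>R \<psi> (r x) + (if r x = 0 then \<psi> 0 else 0)) \<in> borel_measurable M"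
      using measurable_compose[OF r_meas m1] r_meas by measurable
    then have meas: "(\<lambda>x. \<psi> (r x)) \<in> borel_measurable M"
      by (rule measurable_cong[THEN iffD1, rotated]) (use r_nn in \<open>force simp: indicator_def\<close>)
    have int: "integrable P (\<lambda>x. \<psi> (r x))"
    proof (rule P.integrable_const_bound[where B="\<bar>2 * \<psi> (\<rho>/2)\<bar> + 2 * (\<bar>\<psi> 0\<bar> + \<bar>\<psi> \<rho>\<bar>)"])
      have "\<bar>\<psi> (r x)\<bar> \<le> \<bar>2 * \<psi> (\<rho>/2)\<bar> + 2 * (\<bar>\<psi> 0\<bar> + \<bar>\<psi> \<rho>\<bar>)" if "x \<in> space P" for x
        using up[of "r x"] low[of "r x"] r_nn[of x] r_le[of x] that by (simp add: spP abs_le_iff) arith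
      then show "AE x in P. norm (\<psi> (r x)) \<le> \<bar>2 * \<psi> (\<rho>/2)\<bar> + 2 * (\<bar>\<psi> 0\<bar> + \<bar>\<psi> \<rho>\<bar>)" by (intro AE_I2) simp
      show "(\<lambda>x. \<psi> (r x)) \<in> borel_measurable P"
        using meas by (simp add: measurable_cong_sets[OF setsP refl])
    qed
    have intl: "integrable P (\<lambda>x. \<psi> 0 + (\<psi> \<rho> - \<psi> 0) / \<rho> * r x)"
      using r_intP by simp
    have il: "integral\<^sup>L P (\<lambda>x. \<psi> 0 + (\<psi> \<rho> - \<psi> 0) / \<rho> * r x) = \<psi> 0 + (\<psi> \<rho> - \<psi> 0) / \<rho>"
      using r_intP int_r by (simp add: P.prob_space)
    show ?thesis using int intl il lin r_nn r_le by blast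
  qed
  have thB: "integral\<^sup>L P (\<lambda>x. \<psi> (r x)) \<le> \<psi> 0 + (\<psi> \<rho> - \<psi> 0) / \<rho>"
    if cv: "convex_on {0..} \<psi>" for \<psi> :: "real \<Rightarrow> real"
  proof -
    note pb = partB[OF cv]
    have "integral\<^sup>L P (\<lambda>x. \<psi> (r x)) \<le> integral\<^sup>L P (\<lambda>x. \<psi> 0 + (\<psi> \<rho> - \<psi> 0) / \<rho> * r x)"
      apply (rule integral_mono)
      using pb by (auto simp: spP)
    then show ?thesis using pb by linarith
  qed
  have thB': "integral\<^sup>L P (\<lambda>x. \<psi> (r x)) = \<psi> 0 + (\<psi> \<rho> - \<psi> 0) / \<rho>"
    if cv: "convex_on {0..} \<psi>" and tw: "\<forall>x\<in>space M. ratio (g x) (f x) \<in> {0, ereal \<rho>}" for \<psi> :: "real \<Rightarrow> real"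
  proof -
    note pb = partB[OF cv]
    have "integral\<^sup>L P (\<lambda>x. \<psi> (r x)) = integral\<^sup>L P (\<lambda>x. \<psi> 0 + (\<psi> \<rho> - \<psi> 0) / \<rho> * r x)"
    proof (rule Bochner_Integration.integral_cong[OF refl])
      fix x assume "x \<in> space P"
      then have "r x = 0 \<or> r x = \<rho>" using tw by (auto simp: r_def spP)
      then show "\<psi> (r x) = \<psi> 0 + (\<psi> \<rho> - \<psi> 0) / \<rho> * r x" using rho by auto
    qed
    then show ?thesis using pb by linarith
  qed
  show ?thesis
    using thA thB thA' thB' unfolding A_def P_def Q_def r_def by blast
qed

end
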